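(* Let $I\subset\mathbb{R}$ be an open interval, let $\bm{a}:I\to\mathbb{R}^2_1$ be a frontal and $r:I\to\mathbb{R}^+$ a smooth positive function, and suppose the pseudo-circle family $C_{(\bm{a}(t),\pm r(t))}$ creates an envelope. Let $E_2$ denote the union of the images of all envelopes created by this family. Then: (1) $\mathcal{D}=E_2$ if $\bm{a}$ is regular at every $t\in I$; (2) $\mathcal{D}=E_2\cup C_{(\bm{a}(t_1),\pm r(t_1))}\cup\cdots\cup C_{(\bm{a}(t_k),\pm r(t_k))}$ if $t_1,\ldots,t_k$ are the singular points of $\bm{a}$.
   Context: All objects are $C^\infty$. The Minkowski plane $\mathbb{R}^2_1$ is $\mathbb{R}^2$ with $\langle\bm{x},\bm{y}\rangle=-x_1y_1+x_2y_2$ and $\|\bm{x}\|^2:=\langle\bm{x},\bm{x}\rangle$; $S^1_1=\{\bm{x}:\langle\bm{x},\bm{x}\rangle=1\}$, $H^1=\{\bm{x}:\langle\bm{x},\bm{x}\rangle=-1\}$. A smooth $\bm{a}:I\to\mathbb{R}^2_1$ is a frontal if there is a smooth $\bm{\nu}:I\to H^1$ or $S^1_1$ with $\langle\frac{d\bm{a}}{dt}(t),\bm{\nu}(t)\rangle=0$ for all $t$; $t$ is a singular point of $\bm{a}$ if $\frac{d\bm{a}}{dt}(t)=0$, and regular otherwise. $C_{(\bm{a}(t),\pm r(t))}=\{\bm{x}:\langle\bm{x}-\bm{a}(t),\bm{x}-\bm{a}(t)\rangle=\pm r(t)^2\}$ (same sign throughout). An envelope of this family is a smooth $f:I\to\mathbb{R}^2_1$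 with $f(t)\in C_{(\bm{a}(t),\pm r(t))}$ and $\langle\frac{df}{dt}(t),f(t)-\bm{a}(t)\rangle=0$ for all $t$. With $F(x,y,t)=\|(x,y)-\bm{a}(t)\|^2\mp r(t)^2$, the $\mathcal{D}$ envelope is $\mathcal{D}=\{(x,y)\in\mathbb{R}^2_1:\exists t\in I,\ F(x,y,t)=\frac{\partial F}{\partial t}(x,y,t)=0\}$. *)

theory Defs
  imports "HOL-Analysis.Analysis"
begin

text \<open>The Minkowski plane is modelled as real \<times> real with the Lorentzian pseudo-scalar product.\<close>

definition mink :: "real \<times> real \<Rightarrow> real \<times> real \<Rightarrow> real" where
  "mink x y = - fst x * fst y + snd x * snd y"

fun nderiv :: "nat \<Rightarrow> (real \<Rightarrow> 'a::real_normed_vector) \<Rightarrow> real \<Rightarrow> 'a" where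
  "nderiv 0 f = f"
| "nderiv (Suc n) f = (\<lambda>t. vector_derivative (nderiv n f) (at t))"

definition smooth_on :: "real set \<Rightarrow> (real \<Rightarrow> 'a::real_normed_vector) \<Rightarrow> bool" where
  "smooth_on I f \<longleftrightarrow> (\<forall>n. \<forall>t\<in>I. nderiv n f differentiable (at t))"

definition frontal :: "real set \<Rightarrow> (real \<Rightarrow> real \<times> real) \<Rightarrow> bool" where
  "frontal I a \<longleftrightarrow> smooth_on I a \<and>
     (\<exists>\<nu>. smooth_on I \<nu> \<and>
        ((\<forall>t\<in>I. mink (\<nu> t) (\<nu> t) = -1) \<or> (\<forall>t\<in>I. mink (\<nu> t) (\<nu> t) = 1)) \<and>
        (\<forall>t\<in>I. mink (vector_derivative a (at t)) (\<nu> t) = 0))"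

text \<open>Pseudo-circle C_(c, +-rho); the sign is sigma in {1,-1}.\<close>

definition pseudo_circle :: "real \<times> real \<Rightarrow> real \<Rightarrow> real \<Rightarrow> (real \<times> real) set" where
  "pseudo_circle c \<sigma> \<rho> = {x. mink (x - c) (x - c) = \<sigma> * \<rho>\<^sup>2}"

definition is_envelope ::
  "real set \<Rightarrow> (real \<Rightarrow> real \<times> real) \<Rightarrow> real \<Rightarrow> (real \<Rightarrow> real) \<Rightarrow> (real \<Rightarrow> real \<times> real) \<Rightarrow> bool" where
  "is_envelope I a \<sigma> r f \<longleftrightarrow> smooth_on I f \<and>
     (\<forall>t\<in>I. f t \<in> pseudo_circle (a t) \<sigma> (r t) \<and>
             mink (vector_derivative f (at t)) (f t - a t) = 0)"

definition envelope_union ::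
  "real set \<Rightarrow> (real \<Rightarrow> real \<times> real) \<Rightarrow> real \<Rightarrow> (real \<Rightarrow> real) \<Rightarrow> (real \<times> real) set" where
  "envelope_union I a \<sigma> r = \<Union>{f ` I | f. is_envelope I a \<sigma> r f}"

definition Ffam :: "(real \<Rightarrow> real \<times> real) \<Rightarrow> real \<Rightarrow> (real \<Rightarrow> real) \<Rightarrow> real \<times> real \<Rightarrow> real \<Rightarrow> real" where
  "Ffam a \<sigma> r p t = mink (p - a t) (p - a t) - \<sigma> * (r t)\<^sup>2"

definition D_env ::
  "real set \<Rightarrow> (real \<Rightarrow> real \<times> real) \<Rightarrow> real \<Rightarrow> (real \<Rightarrow> real) \<Rightarrow> (real \<times> real) set" where
  "D_env I a \<sigma> r = {p. \<exists>t\<in>I. Ffam a \<sigma> r p t = 0 \<and> ((\<lambda>s. Ffam a \<sigma> r p s) has_real_derivative 0) (at t)}"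

end

theory Submission
  imports Defs
begin


definition smooth_upto :: "nat \<Rightarrow> real set \<Rightarrow> (real \<Rightarrow> 'a::real_normed_vector) \<Rightarrow> bool" where
  "smooth_upto n I f \<longleftrightarrow> (\<forall>m\<le>n. \<forall>t\<in>I. nderiv m f differentiable (at t))"

lemma smooth_on_upto: "smooth_on I f \<longleftrightarrow> (\<forall>n. smooth_upto n I f)"
  unfolding smooth_on_def smooth_upto_def by auto

lemma nderiv_Suc': "nderiv (Suc n) f = nderiv n (\<lambda>t. vector_derivative f (at t))"
  by (induction n arbitrary: f) auto

lemma vd_cong_open:
  assumes "open I" "t \<in> I" "\<And>s. s \<in> I \<Longrightarrow> f s = g s"
  shows "vector_derivative f (at t) = vector_derivative g (at t)"
proof -
  have "\<And>D. (f has_vector_derivative D) (at t) \<longleftrightarrow> (g has_vector_derivative D) (at t)"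
    using has_vector_derivative_transform_within_open assms by metis
  then show ?thesis unfolding vector_derivative_def by simp
qed

lemma nderiv_cong:
  assumes "open I" "\<And>s. s \<in> I \<Longrightarrow> f s = g s"
  shows "t \<in> I \<Longrightarrow> nderiv n f t = nderiv n g t"
proof (induction n arbitrary: t)
  case 0 then show ?case using assms by simp
next
  case (Suc n) then show ?case using vd_cong_open[OF assms(1) Suc.prems, of "nderiv n f" "nderiv n g"] by simp
qed

lemma diff_cong:
  assumes "open I" "t \<in> I" "\<And>s. s \<in> I \<Longrightarrow> f s = g s" "f differentiable (at t)"
  shows "g differentiable (at t)"
proof -
  obtain D where "(f has_derivative D) (at t)" using assms(4) unfolding differentiable_def by blast
  then have "(g has_derivative D) (at t)"
    by (rule has_derivative_transform_within_open[OF _ assms(1,2)]) (use assms(3) in auto)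
  then show ?thesis unfolding differentiable_def by blast
qed

lemma smooth_upto_cong:
  assumes "open I" "\<And>s. s \<in> I \<Longrightarrow> f s = g s" "smooth_upto n I f"
  shows "smooth_upto n I g"
  unfolding smooth_upto_def
proof (intro allI impI ballI)
  fix m t assume "m \<le> n" "t \<in> I"
  have "nderiv m f differentiable (at t)" using assms(3) \<open>m \<le> n\<close> \<open>t \<in> I\<close> unfolding smooth_upto_def by auto
  moreover have "\<And>s. s \<in> I \<Longrightarrow> nderiv m f s = nderiv m g s" by (rule nderiv_cong[OF assms(1,2)])
  ultimately show "nderiv m g differentiable (at t)" using diff_cong[OF assms(1) \<open>t \<in> I\<close>] by blast
qed

lemma smooth_upto_Suc:
  "smooth_upto (Suc n) I f \<longleftrightarrow> (\<forall>t\<in>I. f differentiable (at t)) \<and> smooth_upto n I (\<lambda>t. vector_derivative f (at t))"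
proof
  assume H: "smooth_upto (Suc n) I f"
  have "\<forall>t\<in>I. nderiv 0 f differentiable (at t)" using H unfolding smooth_upto_def by blast
  moreover have "\<forall>m\<le>n. \<forall>t\<in>I. nderiv (Suc m) f differentiable (at t)" using H unfolding smooth_upto_def by auto
  ultimately show "(\<forall>t\<in>I. f differentiable (at t)) \<and> smooth_upto n I (\<lambda>t. vector_derivative f (at t))"
    unfolding smooth_upto_def nderiv_Suc' by simp
next
  assume H: "(\<forall>t\<in>I. f differentiable (at t)) \<and> smooth_upto n I (\<lambda>t. vector_derivative f (at t))"
  show "smooth_upto (Suc n) I f" unfolding smooth_upto_def
  proof (intro allI impI)
    fix m assume "m \<le> Suc n"
    then show "\<forall>t\<in>I. nderiv m f differentiable (at t)"
    proof (cases m)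
      case 0 then show ?thesis using H by simp
    next
      case (Suc k)
      then have "nderiv m f = nderiv k (\<lambda>t. vector_derivative f (at t))" by (simp only: nderiv_Suc')
      then show ?thesis using H \<open>m \<le> Suc n\<close> Suc unfolding smooth_upto_def by simp
    qed
  qed
qed

lemma smooth_upto_mono: "smooth_upto (Suc n) I f \<Longrightarrow> smooth_upto n I f"
  unfolding smooth_upto_def by auto

lemma vd_add_at:
  assumes "u differentiable (at s)" "v differentiable (at s)"
  shows "vector_derivative (\<lambda>t. u t + v t) (at s) = vector_derivative u (at s) + vector_derivative v (at s)"
proof -
  have "(u has_vector_derivative vector_derivative u (at s)) (at s)" "(v has_vector_derivative vector_derivative v (at s)) (at s)"
    using assms vector_derivative_works by blast+
  from has_vector_derivative_add[OF this] show ?thesis by (rule vector_derivative_at)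
qed

lemma vd_bilinear_at:
  fixes prod :: "'a::real_normed_vector \<Rightarrow> 'b::real_normed_vector \<Rightarrow> 'c::real_normed_vector"
    and f :: "real \<Rightarrow> 'a" and g :: "real \<Rightarrow> 'b"
  assumes "bounded_bilinear prod" "f differentiable (at s)" "g differentiable (at s)"
  shows "vector_derivative (\<lambda>t. prod (f t) (g t)) (at s) = prod (f s) (vector_derivative g (at s)) + prod (vector_derivative f (at s)) (g s)"
    and "(\<lambda>t. prod (f t) (g t)) differentiable (at s)"
proof -
  have "(f has_vector_derivative vector_derivative f (at s)) (at s)" "(g has_vector_derivative vector_derivative g (at s)) (at s)"
    using assms vector_derivative_works by blast+
  note h = bounded_bilinear.has_vector_derivative[OF assms(1) this]
  from h show "vector_derivative (\<lambda>t. prod (f t) (g t)) (at s) = prod (f s) (vector_derivative g (at s)) + prod (vector_derivative f (at s)) (g s)"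
    by (rule vector_derivative_at)
  from h show "(\<lambda>t. prod (f t) (g t)) differentiable (at s)" by (rule differentiableI_vector)
qed

lemma smooth_upto_add:
  assumes "open I"
  shows "smooth_upto n I u \<Longrightarrow> smooth_upto n I v \<Longrightarrow> smooth_upto n I (\<lambda>t. u t + v t)"
proof (induction n arbitrary: u v)
  case 0 then show ?case unfolding smooth_upto_def using differentiable_add by auto
next
  case (Suc n)
  have du: "\<forall>t\<in>I. u differentiable (at t)" and u': "smooth_upto n I (\<lambda>t. vector_derivative u (at t))"
    using Suc.prems(1) unfolding smooth_upto_Suc by auto
  have dv: "\<forall>t\<in>I. v differentiable (at t)" and v': "smooth_upto n I (\<lambda>t. vector_derivative v (at t))"
    using Suc.prems(2) unfolding smooth_upto_Suc by auto
  have "smooth_upto n I (\<lambda>t. vector_derivative u (at t) + vector_derivative v (at t))"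
    by (rule Suc.IH[OF u' v'])
  moreover have "\<And>s. s \<in> I \<Longrightarrow> vector_derivative u (at s) + vector_derivative v (at s) = vector_derivative (\<lambda>t. u t + v t) (at s)"
    using du dv vd_add_at by metis
  ultimately have "smooth_upto n I (\<lambda>s. vector_derivative (\<lambda>t. u t + v t) (at s))"
    by (rule smooth_upto_cong[OF assms, rotated])
  moreover have "\<forall>t\<in>I. (\<lambda>t. u t + v t) differentiable (at t)" using du dv differentiable_add by auto
  ultimately show ?case unfolding smooth_upto_Suc by simp
qed

lemma smooth_upto_bilinear:
  fixes prod :: "'a::real_normed_vector \<Rightarrow> 'b::real_normed_vector \<Rightarrow> 'c::real_normed_vector"
  assumes "open I" "bounded_bilinear prod"
  shows "smooth_upto n I f \<Longrightarrow> smooth_upto n I g \<Longrightarrow> smooth_upto n I (\<lambda>t. prod (f t) (g t))"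
proof (induction n arbitrary: f g)
  case 0 then show ?case unfolding smooth_upto_def using vd_bilinear_at(2)[OF assms(2)] by auto
next
  case (Suc n)
  have df: "\<forall>t\<in>I. f differentiable (at t)" and f': "smooth_upto n I (\<lambda>t. vector_derivative f (at t))"
    using Suc.prems(1) unfolding smooth_upto_Suc by auto
  have dg: "\<forall>t\<in>I. g differentiable (at t)" and g': "smooth_upto n I (\<lambda>t. vector_derivative g (at t))"
    using Suc.prems(2) unfolding smooth_upto_Suc by auto
  have "smooth_upto n I (\<lambda>t. prod (f t) (vector_derivative g (at t)))"
    using Suc.IH[OF smooth_upto_mono[OF Suc.prems(1)] g'] .
  moreover have "smooth_upto n I (\<lambda>t. prod (vector_derivative f (at t)) (g t))"
    using Suc.IH[OF f' smooth_upto_mono[OF Suc.prems(2)]] .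
  ultimately have "smooth_upto n I (\<lambda>t. prod (f t) (vector_derivative g (at t)) + prod (vector_derivative f (at t)) (g t))"
    by (rule smooth_upto_add[OF assms(1)])
  moreover have "\<And>s. s \<in> I \<Longrightarrow> prod (f s) (vector_derivative g (at s)) + prod (vector_derivative f (at s)) (g s) = vector_derivative (\<lambda>t. prod (f t) (g t)) (at s)"
    using df dg vd_bilinear_at(1)[OF assms(2)] by metis
  ultimately have "smooth_upto n I (\<lambda>s. vector_derivative (\<lambda>t. prod (f t) (g t)) (at s))"
    by (rule smooth_upto_cong[OF assms(1), rotated])
  moreover have "\<forall>t\<in>I. (\<lambda>t. prod (f t) (g t)) differentiable (at t)" using df dg vd_bilinear_at(2)[OF assms(2)] by auto
  ultimately show ?case unfolding smooth_upto_Suc by simp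
qed

lemma smooth_upto_const: "smooth_upto n I (\<lambda>t. c)"
proof -
  have "nderiv m (\<lambda>t. c) = (if m = 0 then (\<lambda>t. c) else (\<lambda>t. 0))" for m
    by (induction m) auto
  then show ?thesis unfolding smooth_upto_def by auto
qed

lemma smooth_on_add: "open I \<Longrightarrow> smooth_on I u \<Longrightarrow> smooth_on I v \<Longrightarrow> smooth_on I (\<lambda>t. u t + v t)"
  unfolding smooth_on_upto using smooth_upto_add by blast

lemma smooth_on_bilinear:
  fixes prod :: "'a::real_normed_vector \<Rightarrow> 'b::real_normed_vector \<Rightarrow> 'c::real_normed_vector"
  shows "open I \<Longrightarrow> bounded_bilinear prod \<Longrightarrow> smooth_on I f \<Longrightarrow> smooth_on I g \<Longrightarrow> smooth_on I (\<lambda>t. prod (f t) (g t))"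
  unfolding smooth_on_upto using smooth_upto_bilinear by blast

lemma smooth_on_const: "smooth_on I (\<lambda>t. c)"
  unfolding smooth_on_upto using smooth_upto_const by blast

lemma smooth_on_scaleR: "open I \<Longrightarrow> smooth_on I f \<Longrightarrow> smooth_on I (\<lambda>t. c *\<^sub>R f t)"
  using smooth_on_bilinear[OF _ bounded_bilinear_scaleR, of I "\<lambda>t. c" f] smooth_on_const by auto

lemma smooth_on_diff: "open I \<Longrightarrow> smooth_on I u \<Longrightarrow> smooth_on I v \<Longrightarrow> smooth_on I (\<lambda>t. u t - v t)"
proof -
  assume "open I" "smooth_on I u" "smooth_on I v"
  then have "smooth_on I (\<lambda>t. u t + (-1) *\<^sub>R v t)" using smooth_on_add smooth_on_scaleR by blast
  then show ?thesis by simp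
qed

lemma bounded_bilinear_mink: "bounded_bilinear mink"
proof
  show "mink (a + a') b = mink a b + mink a' b" for a a' b by (simp add: mink_def algebra_simps)
  show "mink a (b + b') = mink a b + mink a b'" for a b b' by (simp add: mink_def algebra_simps)
  show "mink (r *\<^sub>R a) b = r *\<^sub>R mink a b" for r a b by (simp add: mink_def algebra_simps)
  show "mink a (r *\<^sub>R b) = r *\<^sub>R mink a b" for r a b by (simp add: mink_def algebra_simps)
  show "\<exists>K. \<forall>x y. norm (mink x y) \<le> norm x * norm y * K"
  proof (intro exI allI)
    fix x y :: "real \<times> real"
    have "\<bar>fst x\<bar> \<le> norm x" "\<bar>snd x\<bar> \<le> norm x" "\<bar>fst y\<bar> \<le> norm y" "\<bar>snd y\<bar> \<le> norm y"
      by (cases x, cases y, simp add: norm_Pair real_sqrt_sum_squares_ge1 real_sqrt_sum_squares_ge2)+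
    then have "\<bar>fst x * fst y\<bar> \<le> norm x * norm y" "\<bar>snd x * snd y\<bar> \<le> norm x * norm y"
      by (auto simp: abs_mult intro: mult_mono)
    then show "norm (mink x y) \<le> norm x * norm y * 2" by (simp add: mink_def)
  qed
qed


lemma alg_two:
  fixes A1 A2 n1 n2 w1 w2 e y1 y2 :: real
  assumes A: "A1 \<noteq> 0 \<or> A2 \<noteq> 0" and hn: "-A1*n1 + A2*n2 = 0" and he: "-n1*n1+n2*n2 = e" and e2: "e*e=1"
    and hw: "-A1*w1 + A2*w2 = 0" and hc: "-((y1+w1)*(y1+w1)) + (y2+w2)*(y2+w2) = -(y1*y1) + y2*y2"
  shows "(w1 = 0 \<and> w2 = 0) \<or> (w1 = -2*e*(-y1*n1+y2*n2)*n1 \<and> w2 = -2*e*(-y1*n1+y2*n2)*n2)"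
proof -
  have "A1*(w1*n2 - w2*n1) = 0" "A2*(w1*n2 - w2*n1) = 0" using hn hw by algebra+
  then have det: "w1*n2 - w2*n1 = 0" using A by auto
  define l where "l = e*(-w1*n1 + w2*n2)"
  have w1: "w1 = l*n1" and w2: "w2 = l*n2" unfolding l_def using det he e2 by algebra+
  have "l*(2*(-y1*n1+y2*n2) + l*e) = 0" using hc he unfolding w1 w2 by algebra
  then have "l = 0 \<or> 2*(-y1*n1+y2*n2) + l*e = 0" by simp
  then have "l = 0 \<or> l = -2*e*(-y1*n1+y2*n2)"
  proof
    assume "2*(-y1*n1+y2*n2) + l*e = 0"
    then have "e*(2*(-y1*n1+y2*n2) + l*e) = 0" by simp
    then show ?thesis using e2 by algebra
  qed simp
  then show ?thesis using w1 w2 by auto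
qed

lemma alg_refl:
  fixes y1 y2 n1 n2 e c :: real
  assumes "-n1*n1 + n2*n2 = e" "e*e = 1" "c = -y1*n1 + y2*n2"
  shows "- ((y1 - 2*e*c*n1)*(y1 - 2*e*c*n1)) + (y2 - 2*e*c*n2)*(y2 - 2*e*c*n2) = -(y1*y1) + y2*y2"
proof -
  have "- ((y1 - 2*e*c*n1)*(y1 - 2*e*c*n1)) + (y2 - 2*e*c*n2)*(y2 - 2*e*c*n2)
      = -(y1*y1) + y2*y2 - 4*e*c*(-y1*n1 + y2*n2) + 4*(e*e)*c*c*(-n1*n1+n2*n2)"
    by (simp add: algebra_simps power2_eq_square)
  also have "\<dots> = -(y1*y1) + y2*y2" using assms by simp
  finally show ?thesis .
qed

lemma smooth_diff_at: "smooth_on I f \<Longrightarrow> t \<in> I \<Longrightarrow> f differentiable (at t)"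
  unfolding smooth_on_def by (metis nderiv.simps(1))

lemma alg_two_vec:
  fixes A N W Y :: "real \<times> real"
  assumes "A \<noteq> 0" "mink A N = 0" "mink N N = e" "e*e = 1" "mink A W = 0" "mink (Y + W) (Y + W) = mink Y Y"
  shows "W = 0 \<or> W = - ((2*e*mink Y N) *\<^sub>R N)"
proof -
  obtain A1 A2 where A: "A = (A1, A2)" by (cases A)
  obtain n1 n2 where N: "N = (n1, n2)" by (cases N)
  obtain w1 w2 where W: "W = (w1, w2)" by (cases W)
  obtain y1 y2 where Y: "Y = (y1, y2)" by (cases Y)
  have "(w1 = 0 \<and> w2 = 0) \<or> (w1 = -2*e*(-y1*n1+y2*n2)*n1 \<and> w2 = -2*e*(-y1*n1+y2*n2)*n2)"
  proof (rule alg_two)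
    show "A1 \<noteq> 0 \<or> A2 \<noteq> 0" using assms(1) A by (auto simp: zero_prod_def)
    show "-A1*n1 + A2*n2 = 0" using assms(2) A N by (simp add: mink_def)
    show "-n1*n1 + n2*n2 = e" using assms(3) N by (simp add: mink_def)
    show "e*e = 1" by fact
    show "-A1*w1 + A2*w2 = 0" using assms(5) A W by (simp add: mink_def)
    show "-((y1+w1)*(y1+w1)) + (y2+w2)*(y2+w2) = -(y1*y1) + y2*y2" using assms(6) W Y unfolding mink_def by (simp add: algebra_simps)
  qed
  then show ?thesis using N W Y by (auto simp: mink_def zero_prod_def)
qed

lemma alg_refl_vec:
  fixes N Y :: "real \<times> real"
  assumes "mink N N = e" "e*e = 1"
  shows "mink (Y - ((2*e)*mink Y N) *\<^sub>R N) (Y - ((2*e)*mink Y N) *\<^sub>R N) = mink Y Y"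
proof -
  obtain n1 n2 where N: "N = (n1, n2)" by (cases N)
  obtain y1 y2 where Y: "Y = (y1, y2)" by (cases Y)
  have "- ((y1 - 2*e*(-y1*n1 + y2*n2)*n1)*(y1 - 2*e*(-y1*n1 + y2*n2)*n1)) + (y2 - 2*e*(-y1*n1 + y2*n2)*n2)*(y2 - 2*e*(-y1*n1 + y2*n2)*n2) = -(y1*y1) + y2*y2"
    by (rule alg_refl) (use assms N in \<open>auto simp: mink_def\<close>)
  then show ?thesis using N Y unfolding mink_def by (simp add: algebra_simps)
qed

lemma mink_lin: "mink x (y - k *\<^sub>R z) = mink x y - k * mink x z"
  by (simp add: mink_def algebra_simps)

lemma mink_sym: "mink x y = mink y x"
  by (simp add: mink_def mult.commute)

lemma has_vd_sq:
  fixes r :: "real \<Rightarrow> real"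
  assumes "(r has_vector_derivative r') (at t)"
  shows "((\<lambda>s. \<sigma> * (r s * r s)) has_vector_derivative (2 * \<sigma> * r t * r')) (at t)"
proof -
  have "((\<lambda>s. r s * r s) has_vector_derivative (r t * r' + r' * r t)) (at t)"
    by (rule bounded_bilinear.has_vector_derivative[OF bounded_bilinear_mult assms assms])
  from bounded_linear.has_vector_derivative[OF bounded_linear_mult_right this, of \<sigma>]
  show ?thesis by (simp add: algebra_simps)
qed

lemma circ_deriv:
  fixes g a :: "real \<Rightarrow> real \<times> real"
  assumes "open I" "t \<in> I" "g differentiable (at t)" "a differentiable (at t)" "r differentiable (at t)"
    and circ: "\<And>s. s \<in> I \<Longrightarrow> mink (g s - a s) (g s - a s) = \<sigma> * (r s)\<^sup>2"
  shows "mink (vector_derivative g (at t)) (g t - a t) - mink (vector_derivative a (at t)) (g t - a t)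
         = \<sigma> * r t * vector_derivative r (at t)"
proof -
  let ?g' = "vector_derivative g (at t)" and ?a' = "vector_derivative a (at t)" and ?r' = "vector_derivative r (at t)"
  have hg: "(g has_vector_derivative ?g') (at t)" and ha: "(a has_vector_derivative ?a') (at t)"
    and hr: "(r has_vector_derivative ?r') (at t)" using assms(3-5) vector_derivative_works by blast+
  have hy: "((\<lambda>s. g s - a s) has_vector_derivative (?g' - ?a')) (at t)" by (rule has_vector_derivative_diff[OF hg ha])
  have H1: "((\<lambda>s. mink (g s - a s) (g s - a s)) has_vector_derivative
      (mink (g t - a t) (?g' - ?a') + mink (?g' - ?a') (g t - a t))) (at t)"
    by (rule bounded_bilinear.has_vector_derivative[OF bounded_bilinear_mink hy hy])
  have H1': "((\<lambda>s. \<sigma> * (r s * r s)) has_vector_derivative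
      (mink (g t - a t) (?g' - ?a') + mink (?g' - ?a') (g t - a t))) (at t)"
    by (rule has_vector_derivative_transform_within_open[OF H1 assms(1,2)]) (simp add: circ power2_eq_square)
  have H2: "((\<lambda>s. \<sigma> * (r s * r s)) has_vector_derivative (2 * \<sigma> * r t * ?r')) (at t)"
    by (rule has_vd_sq[OF hr])
  have "mink (g t - a t) (?g' - ?a') + mink (?g' - ?a') (g t - a t) = 2 * \<sigma> * r t * ?r'"
    using vector_derivative_unique_at[OF H1' H2] .
  then show ?thesis by (simp add: mink_def algebra_simps)
qed

lemma Ffam_deriv:
  fixes a :: "real \<Rightarrow> real \<times> real"
  assumes "a differentiable (at t)" "r differentiable (at t)"
  shows "((\<lambda>s. Ffam a \<sigma> r p s) has_real_derivative
     (-2 * mink (vector_derivative a (at t)) (p - a t) - 2 * \<sigma> * r t * vector_derivative r (at t))) (at t)"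
proof -
  let ?a' = "vector_derivative a (at t)" and ?r' = "vector_derivative r (at t)"
  have ha: "(a has_vector_derivative ?a') (at t)"
    and hr: "(r has_vector_derivative ?r') (at t)" using assms vector_derivative_works by blast+
  have hy: "((\<lambda>s. p - a s) has_vector_derivative (0 - ?a')) (at t)"
    by (rule has_vector_derivative_diff[OF has_vector_derivative_const ha])
  have H1: "((\<lambda>s. mink (p - a s) (p - a s)) has_vector_derivative
      (mink (p - a t) (0 - ?a') + mink (0 - ?a') (p - a t))) (at t)"
    by (rule bounded_bilinear.has_vector_derivative[OF bounded_bilinear_mink hy hy])
  have H: "((\<lambda>s. mink (p - a s) (p - a s) - \<sigma> * (r s * r s)) has_vector_derivative
      (mink (p - a t) (0 - ?a') + mink (0 - ?a') (p - a t) - 2 * \<sigma> * r t * ?r')) (at t)"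
    by (rule has_vector_derivative_diff[OF H1 has_vd_sq[OF hr]])
  have eq1: "(\<lambda>s. Ffam a \<sigma> r p s) = (\<lambda>s. mink (p - a s) (p - a s) - \<sigma> * (r s * r s))"
    by (simp add: Ffam_def power2_eq_square)
  have eq2: "mink (p - a t) (0 - ?a') + mink (0 - ?a') (p - a t) - 2 * \<sigma> * r t * ?r'
      = -2 * mink ?a' (p - a t) - 2 * \<sigma> * r t * ?r'"
    by (simp add: mink_def algebra_simps)
  show ?thesis using H unfolding eq1 eq2 has_real_derivative_iff_has_vector_derivative .
qed

theorem theorem5:
  fixes I :: "real set" and a :: "real \<Rightarrow> real \<times> real" and r :: "real \<Rightarrow> real" and \<sigma> :: real
  assumes "open I" and "is_interval I" and "I \<noteq> {}"
    and "frontal I a"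
    and "smooth_on I r" and "\<forall>t\<in>I. r t > 0"
    and "\<sigma> = 1 \<or> \<sigma> = -1"
    and "\<exists>f. is_envelope I a \<sigma> r f"
  shows "((\<forall>t\<in>I. vector_derivative a (at t) \<noteq> 0) \<longrightarrow>
            D_env I a \<sigma> r = envelope_union I a \<sigma> r)
       \<and> (finite {t\<in>I. vector_derivative a (at t) = 0} \<longrightarrow>
            D_env I a \<sigma> r = envelope_union I a \<sigma> r \<union>
              (\<Union>t\<in>{t\<in>I. vector_derivative a (at t) = 0}. pseudo_circle (a t) \<sigma> (r t)))"
proof -
  note oI = assms(1)
  obtain f0 where f0: "is_envelope I a \<sigma> r f0" using assms(8) by blast
  from assms(4) obtain \<nu> where sa: "smooth_on I a" and s\<nu>: "smooth_on I \<nu>"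
    and nn: "(\<forall>t\<in>I. mink (\<nu> t) (\<nu> t) = -1) \<or> (\<forall>t\<in>I. mink (\<nu> t) (\<nu> t) = 1)"
    and an: "\<forall>t\<in>I. mink (vector_derivative a (at t)) (\<nu> t) = 0"
    unfolding frontal_def by blast
  obtain e :: real where e: "e*e = 1" and ne: "\<And>t. t \<in> I \<Longrightarrow> mink (\<nu> t) (\<nu> t) = e"
    using nn by (metis mult_minus_left mult_1 minus_minus)
  have da: "\<And>t. t \<in> I \<Longrightarrow> a differentiable (at t)" using sa smooth_diff_at by blast
  have dr: "\<And>t. t \<in> I \<Longrightarrow> r differentiable (at t)" using assms(5) smooth_diff_at by blast
  have rel: "mink (vector_derivative a (at t)) (f t - a t) = -(\<sigma> * r t * vector_derivative r (at t))"
    if f: "is_envelope I a \<sigma> r f" and t: "t \<in> I" for f t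
  proof -
    have sf: "smooth_on I f" and fc: "\<And>s. s \<in> I \<Longrightarrow> f s \<in> pseudo_circle (a s) \<sigma> (r s)"
      and fd: "mink (vector_derivative f (at t)) (f t - a t) = 0"
      using f t unfolding is_envelope_def by auto
    have "mink (vector_derivative f (at t)) (f t - a t) - mink (vector_derivative a (at t)) (f t - a t)
         = \<sigma> * r t * vector_derivative r (at t)"
      by (rule circ_deriv[OF oI t smooth_diff_at[OF sf t] da[OF t] dr[OF t]])
        (use fc in \<open>auto simp: pseudo_circle_def\<close>)
    then show ?thesis using fd by simp
  qed
  define f1 where "f1 = (\<lambda>s. f0 s - ((2*e) * mink (f0 s - a s) (\<nu> s)) *\<^sub>R \<nu> s)"
  have sf0: "smooth_on I f0" using f0 unfolding is_envelope_def by blast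
  have sf1: "smooth_on I f1"
  proof -
    have "smooth_on I (\<lambda>s. f0 s - a s)" by (rule smooth_on_diff[OF oI sf0 sa])
    then have "smooth_on I (\<lambda>s. mink (f0 s - a s) (\<nu> s))"
      by (rule smooth_on_bilinear[OF oI bounded_bilinear_mink _ s\<nu>])
    then have "smooth_on I (\<lambda>s. (2*e) * mink (f0 s - a s) (\<nu> s))"
      by (rule smooth_on_bilinear[OF oI bounded_bilinear_mult smooth_on_const])
    then have "smooth_on I (\<lambda>s. ((2*e) * mink (f0 s - a s) (\<nu> s)) *\<^sub>R \<nu> s)"
      by (rule smooth_on_bilinear[OF oI bounded_bilinear_scaleR _ s\<nu>])
    then show ?thesis unfolding f1_def by (rule smooth_on_diff[OF oI sf0])
  qed
  have f1a: "f1 s - a s = (f0 s - a s) - ((2*e) * mink (f0 s - a s) (\<nu> s)) *\<^sub>R \<nu> s" for s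
    unfolding f1_def by simp
  have f1c: "mink (f1 s - a s) (f1 s - a s) = mink (f0 s - a s) (f0 s - a s)" if "s \<in> I" for s
    unfolding f1a by (rule alg_refl_vec[OF ne[OF that] e])
  have f0c: "mink (f0 s - a s) (f0 s - a s) = \<sigma> * (r s)\<^sup>2" if "s \<in> I" for s
    using f0 that unfolding is_envelope_def pseudo_circle_def by auto
  have f1env: "is_envelope I a \<sigma> r f1"
    unfolding is_envelope_def
  proof (intro conjI ballI sf1)
    fix t assume t: "t \<in> I"
    show "f1 t \<in> pseudo_circle (a t) \<sigma> (r t)" using f1c[OF t] f0c[OF t] by (simp add: pseudo_circle_def)
    have "mink (vector_derivative f1 (at t)) (f1 t - a t) - mink (vector_derivative a (at t)) (f1 t - a t)
         = \<sigma> * r t * vector_derivative r (at t)"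
      by (rule circ_deriv[OF oI t smooth_diff_at[OF sf1 t] da[OF t] dr[OF t]]) (simp add: f1c f0c)
    moreover have "mink (vector_derivative a (at t)) (f1 t - a t) = mink (vector_derivative a (at t)) (f0 t - a t)"
      using an t unfolding f1a mink_lin by simp
    ultimately show "mink (vector_derivative f1 (at t)) (f1 t - a t) = 0"
      using rel[OF f0 t] by simp
  qed
  have Dchar: "p \<in> D_env I a \<sigma> r \<longleftrightarrow> (\<exists>t\<in>I. mink (p - a t) (p - a t) = \<sigma> * (r t)\<^sup>2
      \<and> mink (vector_derivative a (at t)) (p - a t) = -(\<sigma> * r t * vector_derivative r (at t)))" for p
  proof -
    have "Ffam a \<sigma> r p t = 0 \<and> ((\<lambda>s. Ffam a \<sigma> r p s) has_real_derivative 0) (at t) \<longleftrightarrow>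
       mink (p - a t) (p - a t) = \<sigma> * (r t)\<^sup>2
      \<and> mink (vector_derivative a (at t)) (p - a t) = -(\<sigma> * r t * vector_derivative r (at t))"
      if t: "t \<in> I" for t
    proof -
      note h = Ffam_deriv[OF da[OF t] dr[OF t], of \<sigma> p]
      have "((\<lambda>s. Ffam a \<sigma> r p s) has_real_derivative 0) (at t) \<longleftrightarrow>
        -2 * mink (vector_derivative a (at t)) (p - a t) - 2 * \<sigma> * r t * vector_derivative r (at t) = 0"
        using h DERIV_unique by metis
      then show ?thesis by (auto simp: Ffam_def)
    qed
    then show ?thesis unfolding D_env_def by auto
  qed
  have main: "D_env I a \<sigma> r = envelope_union I a \<sigma> r \<union>
              (\<Union>t\<in>{t\<in>I. vector_derivative a (at t) = 0}. pseudo_circle (a t) \<sigma> (r t))"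
  proof (intro equalityI subsetI)
    fix p assume "p \<in> D_env I a \<sigma> r"
    then obtain t where t: "t \<in> I" and pc: "mink (p - a t) (p - a t) = \<sigma> * (r t)\<^sup>2"
      and pd: "mink (vector_derivative a (at t)) (p - a t) = -(\<sigma> * r t * vector_derivative r (at t))"
      using Dchar by blast
    show "p \<in> envelope_union I a \<sigma> r \<union>
              (\<Union>t\<in>{t\<in>I. vector_derivative a (at t) = 0}. pseudo_circle (a t) \<sigma> (r t))"
    proof (cases "vector_derivative a (at t) = 0")
      case True
      then show ?thesis using t pc by (auto simp: pseudo_circle_def)
    next
      case False
      have "p - f0 t = 0 \<or> p - f0 t = - ((2*e*mink (f0 t - a t) (\<nu> t)) *\<^sub>R \<nu> t)"
      proof (rule alg_two_vec[OF False])
        show "mink (vector_derivative a (at t)) (\<nu> t) = 0" using an t by blast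
        show "mink (\<nu> t) (\<nu> t) = e" by (rule ne[OF t])
        show "e*e = 1" by (rule e)
        have "mink (vector_derivative a (at t)) (p - f0 t) = mink (vector_derivative a (at t)) (p - a t) - mink (vector_derivative a (at t)) (f0 t - a t)"
          by (simp add: mink_def algebra_simps)
        then show "mink (vector_derivative a (at t)) (p - f0 t) = 0" using pd rel[OF f0 t] by simp
        show "mink ((f0 t - a t) + (p - f0 t)) ((f0 t - a t) + (p - f0 t)) = mink (f0 t - a t) (f0 t - a t)"
          using pc f0c[OF t] by simp
      qed
      then have "p = f0 t \<or> p = f1 t" unfolding f1_def by (auto simp: algebra_simps)
      then have "p \<in> envelope_union I a \<sigma> r"
        unfolding envelope_union_def using f0 f1env t by blast
      then show ?thesis by blast
    qed
  next
    fix p assume "p \<in> envelope_union I a \<sigma> r \<union>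
              (\<Union>t\<in>{t\<in>I. vector_derivative a (at t) = 0}. pseudo_circle (a t) \<sigma> (r t))"
    then show "p \<in> D_env I a \<sigma> r"
    proof
      assume "p \<in> envelope_union I a \<sigma> r"
      then obtain f t where f: "is_envelope I a \<sigma> r f" and t: "t \<in> I" and p: "p = f t"
        unfolding envelope_union_def by blast
      have "mink (p - a t) (p - a t) = \<sigma> * (r t)\<^sup>2"
        using f t p unfolding is_envelope_def pseudo_circle_def by auto
      then show ?thesis using Dchar rel[OF f t] t p by blast
    next
      assume "p \<in> (\<Union>t\<in>{t\<in>I. vector_derivative a (at t) = 0}. pseudo_circle (a t) \<sigma> (r t))"
      then obtain t where t: "t \<in> I" and a0: "vector_derivative a (at t) = 0"
        and pc: "mink (p - a t) (p - a t) = \<sigma> * (r t)\<^sup>2" unfolding pseudo_circle_def by blast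
      have "0 = -(\<sigma> * r t * vector_derivative r (at t))" using rel[OF f0 t] a0 by (simp add: mink_def)
      then have "mink (vector_derivative a (at t)) (p - a t) = -(\<sigma> * r t * vector_derivative r (at t))"
        using a0 by (simp add: mink_def)
      then show ?thesis using Dchar pc t by blast
    qed
  qed
  show ?thesis using main by auto
qed

end
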